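(* Let $A,C\in\mathbb{C}^{n\times n}$ be Hermitian positive semidefinite. Then $\|I+AC\|\ge 1$, and equality holds if and only if $AC=0$.
   Context: $\|\cdot\|$ is the spectral (operator) norm. *)

theory Defs
  imports "HOL-Analysis.Analysis"
begin

definition adjoint_mat :: "complex^'n^'n \<Rightarrow> complex^'n^'n" where
  "adjoint_mat A = (\<chi> i j. cnj (A $ j $ i))"

definition hermitian_mat :: "complex^'n^'n \<Rightarrow> bool" where
  "hermitian_mat A \<longleftrightarrow> adjoint_mat A = A"

definition hpsd :: "complex^'n^'n \<Rightarrow> bool" where
  "hpsd A \<longleftrightarrow> hermitian_mat A \<and>
     (\<forall>x::complex^'n. 0 \<le> Re (\<Sum>i\<in>UNIV. cnj (x $ i) * (A *v x) $ i))"

definition spec_norm :: "complex^'n^'n \<Rightarrow> real" where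
  "spec_norm A = onorm (\<lambda>x::complex^'n. A *v x)"

end

theory Submission
  imports Defs
begin

lemma lin_scale: fixes B :: "complex^'n^'m" shows "B *v (t *\<^sub>R w) = t *\<^sub>R (B *v w)"
  by (metis bounded_linear.axioms(1) linear_scale matrix_vector_mul_bounded_linear)

lemma psd_zero:
  fixes B :: "complex^'n^'n"
  assumes sym: "\<And>x y. inner x (B *v y) = inner (B *v x) y"
    and pos: "\<And>z. inner z (B *v z) \<ge> 0" and z: "inner x (B *v x) = 0"
  shows "B *v x = 0"
proof -
  define w where "w = B *v x"
  define a where "a = inner w w"
  define c where "c = inner w (B *v w)"
  have c0: "c \<ge> 0" using pos c_def by auto
  have a0: "a \<ge> 0" using a_def by auto
  have key: "0 \<le> 2 * t * a + t^2 * c" for t :: real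
  proof -
    have "0 \<le> inner (x + t *\<^sub>R w) (B *v (x + t *\<^sub>R w))" by (rule pos)
    also have "\<dots> = inner x (B *v x) + t * inner x (B *v w) + t * inner w (B *v x) + t^2 * c"
      by (simp add: matrix_vector_right_distrib lin_scale inner_add_left inner_add_right c_def power2_eq_square algebra_simps)
    also have "inner x (B *v w) = a" using sym[of x w] by (simp add: a_def w_def inner_commute)
    also have "inner w (B *v x) = a" by (simp add: a_def w_def)
    finally show ?thesis using z by (simp add: mult_ac)
  qed
  have "a = 0"
  proof (rule ccontr)
    assume "a \<noteq> 0" hence ap: "a > 0" using a0 by simp
    define t where "t = - a/(c+1)"
    have cn: "c + 1 \<noteq> 0" using c0 by simp
    have aeq: "a = - t * (c+1)" using cn by (simp add: t_def)
    have tn: "t \<noteq> 0" using ap aeq by auto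
    have "0 \<le> 2 * t * a + t^2 * c" by (rule key)
    moreover have "2 * t * a + t^2 * c = -(t^2 * (c+2))" by (simp add: aeq power2_eq_square algebra_simps)
    moreover have "t^2 * (c+2) > 0" using tn c0 by (intro mult_pos_pos) auto
    ultimately show False by linarith
  qed
  thus ?thesis using a_def w_def by simp
qed

lemma inner_cip: fixes x y :: "complex^'n"
  shows "inner x y = Re (\<Sum>i\<in>UNIV. cnj (x $ i) * y $ i)"
  by (simp add: inner_vec_def inner_complex_def Re_sum)

lemma herm_sym: fixes A :: "complex^'n^'n"
  assumes "hermitian_mat A"
  shows "inner x (A *v y) = inner (A *v x) y"
proof -
  have h: "cnj (A $ j $ i) = A $ i $ j" for i j
    using assms unfolding hermitian_mat_def adjoint_mat_def
    by (metis vec_lambda_beta)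
  have "(\<Sum>i\<in>UNIV. cnj (x $ i) * (A *v y) $ i) = (\<Sum>i\<in>UNIV. cnj ((A *v x) $ i) * y $ i)"
    unfolding matrix_vector_mult_def
    apply (simp add: sum_distrib_left sum_distrib_right h)
    apply (subst sum.swap)
    apply (simp add: mult_ac)
    done
  thus ?thesis by (simp add: inner_cip)
qed

lemma psd_pos: fixes A :: "complex^'n^'n"
  assumes "hpsd A" shows "inner x (A *v x) \<ge> 0"
  using assms unfolding hpsd_def by (simp add: inner_cip)

lemma main_zero:
  fixes A C :: "complex^'n^'n"
  assumes hA: "hpsd A" and hC: "hpsd C" and le: "spec_norm (mat 1 + A ** C) \<le> 1"
  shows "A ** C = 0"
proof -
  define g where "g = (\<lambda>v::complex^'n. A *v (C *v v))"
  define f where "f = (\<lambda>v. v + g v)"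
  define \<Phi> where "\<Phi> = (\<lambda>v::complex^'n. inner v (C *v v))"
  have symA: "\<And>x y. inner x (A *v y) = inner (A *v x) y"
    using hA herm_sym hpsd_def by blast
  have symC: "\<And>x y. inner x (C *v y) = inner (C *v x) y"
    using hC herm_sym hpsd_def by blast
  have posA: "\<And>z. inner z (A *v z) \<ge> 0" using psd_pos[OF hA] .
  have posC: "\<And>z. inner z (C *v z) \<ge> 0" using psd_pos[OF hC] .
  have Mf: "(mat 1 + A ** C) *v v = f v" for v
    by (simp add: f_def g_def matrix_vector_mult_add_rdistrib matrix_vector_mul_assoc)
  have fnorm: "norm (f v) \<le> norm v" for v
  proof -
    have "norm ((mat 1 + A ** C) *v v) \<le> onorm (\<lambda>x. (mat 1 + A ** C) *v x) * norm v"
      by (rule onorm) simp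
    also have "\<dots> \<le> 1 * norm v" using le unfolding spec_norm_def
      by (intro mult_right_mono) auto
    finally show ?thesis using Mf by simp
  qed
  have fknorm: "norm ((f ^^ k) u) \<le> norm u" for k u
    by (induction k) (auto intro: order_trans[OF fnorm])
  have step: "\<Phi> (f v) \<ge> \<Phi> v + \<Phi> (g v)" for v
  proof -
    have "\<Phi> (f v) = \<Phi> v + inner v (C *v g v) + inner (g v) (C *v v) + \<Phi> (g v)"
      by (simp add: \<Phi>_def f_def matrix_vector_right_distrib inner_add_left inner_add_right)
    moreover have "inner v (C *v g v) \<ge> 0"
      using symC[of v "g v"] posA[of "C *v v"] by (simp add: g_def)
    moreover have "inner (g v) (C *v v) \<ge> 0"
      using posA[of "C *v v"] by (simp add: g_def inner_commute)
    ultimately show ?thesis by linarith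
  qed
  have comm: "g (f v) = f (g v)" for v
    by (simp add: f_def g_def matrix_vector_right_distrib)
  have commk: "g ((f ^^ k) v) = (f ^^ k) (g v)" for k v
    by (induction k) (auto simp: comm)
  have posPhi: "\<Phi> v \<ge> 0" for v using posC \<Phi>_def by simp
  have mono: "\<Phi> ((f ^^ k) w) \<ge> \<Phi> w" for k w
  proof (induction k)
    case (Suc k)
    then show ?case using step[of "(f ^^ k) w"] posPhi[of "g ((f ^^ k) w)"] by simp
  qed simp
  have grow: "\<Phi> ((f ^^ k) u) \<ge> \<Phi> u + real k * \<Phi> (g u)" for k u
  proof (induction k)
    case (Suc k)
    have "\<Phi> ((f ^^ Suc k) u) \<ge> \<Phi> ((f ^^ k) u) + \<Phi> ((f ^^ k) (g u))"
      using step[of "(f ^^ k) u"] commk[where k=k and v=u] by simp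
    then show ?case using Suc mono[where k=k and w="g u"] by (simp add: algebra_simps)
  qed simp
  define K where "K = onorm (\<lambda>x. C *v x)"
  have bound: "\<Phi> x \<le> K * norm x ^ 2" for x
  proof -
    have "\<Phi> x \<le> norm x * norm (C *v x)" unfolding \<Phi>_def by (rule norm_cauchy_schwarz)
    also have "\<dots> \<le> norm x * (K * norm x)" unfolding K_def
      by (intro mult_left_mono onorm) auto
    finally show ?thesis by (simp add: power2_eq_square mult_ac)
  qed
  have zero: "A *v (C *v u) = 0" for u
  proof -
    have b: "\<Phi> u + real k * \<Phi> (g u) \<le> K * norm u ^ 2" for k
    proof -
      have "\<Phi> ((f ^^ k) u) \<le> K * norm ((f ^^ k) u) ^ 2" by (rule bound)
      also have "\<dots> \<le> K * norm u ^ 2"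
        using fknorm[where k=k and u=u] by (intro mult_left_mono power_mono) (auto simp: K_def onorm_pos_le)
      finally show ?thesis using grow[where k=k and u=u] by linarith
    qed
    have g0: "\<Phi> (g u) = 0"
    proof (rule ccontr)
      assume "\<Phi> (g u) \<noteq> 0" hence gp: "\<Phi> (g u) > 0" using posPhi[of "g u"] by simp
      obtain k :: nat where k: "K * norm u ^ 2 / \<Phi> (g u) < real k" using reals_Archimedean2 by blast
      hence "K * norm u ^ 2 < real k * \<Phi> (g u)" using gp by (simp add: divide_less_eq)
      thus False using b[of k] posPhi[of u] by linarith
    qed
    have "C *v g u = 0" using psd_zero[of C "g u"] symC posC g0 \<Phi>_def by blast
    hence "inner (C *v u) (A *v (C *v u)) = 0"
      using symC[of u "A *v (C *v u)"] by (simp add: g_def)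
    thus ?thesis using psd_zero[of A "C *v u"] symA posA by blast
  qed
  show ?thesis
    by (subst matrix_eq) (simp add: matrix_vector_mul_assoc[symmetric] zero)
qed

theorem proposition3p2:
  fixes A C :: "complex^'n^'n"
  assumes "hpsd A" and "hpsd C"
  shows "spec_norm (mat 1 + A ** C) \<ge> 1 \<and>
         (spec_norm (mat 1 + A ** C) = 1 \<longleftrightarrow> A ** C = 0)"
proof -
  have id1: "spec_norm (mat 1 + (0::complex^'n^'n)) = 1"
  proof -
    have "(*v) (mat 1 :: complex^'n^'n) = (\<lambda>x. x)" by (rule ext) simp
    thus ?thesis unfolding spec_norm_def by (simp add: onorm_id)
  qed
  have imp: "spec_norm (mat 1 + A ** C) \<le> 1 \<Longrightarrow> A ** C = 0"
    using main_zero assms by blast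
  show ?thesis
  proof (intro conjI iffI)
    show "spec_norm (mat 1 + A ** C) \<ge> 1"
    proof (rule ccontr)
      assume lt: "\<not> spec_norm (mat 1 + A ** C) \<ge> 1"
      hence "A ** C = 0" using imp by simp
      thus False using id1 lt by simp
    qed
  next
    assume "spec_norm (mat 1 + A ** C) = 1" thus "A ** C = 0" using imp by simp
  next
    assume "A ** C = 0" thus "spec_norm (mat 1 + A ** C) = 1" using id1 by simp
  qed
qed

end
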